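(* Let $G$ be a finite group of order greater than $1$ and let $q$ be the smallest prime divisor of $|G|$. If $\mathcal{F}_{pp}(G)=\{1,f\}$ for some integer $f>1$, then $f\geq q$.
   Context: All groups are finite. For a group $G$ and a positive integer $n$ dividing $|G|$, let $F_n(G)=\{g\in G\mid g^n=1\}$. By Frobenius' theorem $|F_n(G)|=f_n\cdot n$ for a positive integer $f_n$, called the Frobenius quotient of $G$ for $n$. ${\rm exp}(G)$ denotes the exponent of $G$. A prime-power divisor of ${\rm exp}(G)$ is a positive divisor $n$ of ${\rm exp}(G)$ of the form $n=p^k$ with $p$ prime and $k\geq 0$ (so $n=1$ is included). $\mathcal{F}_{pp}(G)=\{f_n\mid n \text{ is a prime-power divisor of } {\rm exp}(G)\}$. *)

theory Defs
  imports "HOL-Algebra.Algebra" "HOL-Computational_Algebra.Primes"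
begin

definition group_exp :: "('a, 'b) monoid_scheme \<Rightarrow> nat" where
  "group_exp G = Lcm (group.ord G ` carrier G)"

definition frob_set :: "('a, 'b) monoid_scheme \<Rightarrow> nat \<Rightarrow> 'a set" where
  "frob_set G n = {g \<in> carrier G. g [^]\<^bsub>G\<^esub> n = \<one>\<^bsub>G\<^esub>}"

text \<open>Frobenius quotient f_n = |F_n(G)| / n (an integer by Frobenius' theorem when n divides |G|).\<close>
definition frob_quot :: "('a, 'b) monoid_scheme \<Rightarrow> nat \<Rightarrow> nat" where
  "frob_quot G n = card (frob_set G n) div n"

text \<open>Prime-power divisors of exp(G), including 1 = p^0.\<close>
definition pp_divisors_exp :: "('a, 'b) monoid_scheme \<Rightarrow> nat set" where
  "pp_divisors_exp G = {n. n dvd group_exp G \<and> (\<exists>p k. Factorial_Ring.prime (p::nat) \<and> n = p ^ k)}"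

definition F_pp :: "('a, 'b) monoid_scheme \<Rightarrow> nat set" where
  "F_pp G = frob_quot G ` pp_divisors_exp G"

end

theory Submission
  imports Defs "HOL-Algebra.Sylow" "HOL-Number_Theory.Totient"
begin

definition tot :: "nat \<Rightarrow> nat set" where "tot d = {k \<in> {0<..d}. coprime k d}"

context group begin

definition gens :: "'a \<Rightarrow> 'a set" where "gens x = (\<lambda>k. x [^] k) ` tot (ord x)"

lemma pow_mod_ord:
  assumes "x \<in> carrier G"
  shows "x [^] n = x [^] (n mod ord x)"
proof -
  have e: "x [^] n = x [^] (n mod ord x) \<otimes> (x [^] ord x) [^] (n div ord x)"
  proof -
    have "x [^] (n mod ord x) \<otimes> (x [^] ord x) [^] (n div ord x) = x [^] (n mod ord x + ord x * (n div ord x))"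
      using assms by (simp only: nat_pow_pow nat_pow_mult)
    then show ?thesis by (simp only: mod_mult_div_eq)
  qed
  have "x [^] ord x = \<one>" using assms by simp
  then show ?thesis using e assms by simp
qed

lemma gens_self:
  assumes "finite (carrier G)" "x \<in> carrier G"
  shows "x \<in> gens x"
proof -
  have "ord x \<ge> 1" using ord_ge_1 assms by blast
  then have "1 \<in> tot (ord x)" by (simp add: tot_def)
  then show ?thesis unfolding gens_def using assms by force
qed

lemma gens_ord:
  assumes "finite (carrier G)" "x \<in> carrier G" "y \<in> gens x"
  shows "y \<in> carrier G \<and> ord y = ord x"
proof -
  obtain k where k: "k \<in> tot (ord x)" "y = x [^] k" using assms unfolding gens_def by blast
  then have "coprime k (ord x)" by (simp add: tot_def)
  then show ?thesis using k assms pow_ord_eq_ord_iff by simp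
qed

lemma gens_in:
  assumes "finite (carrier G)" "x \<in> carrier G" "ord w = ord x" "w = x [^] (n::nat)"
  shows "w \<in> gens x"
proof -
  have d1: "ord x \<ge> 1" using ord_ge_1 assms by blast
  have cop: "coprime n (ord x)" using assms pow_ord_eq_ord_iff by simp
  show ?thesis
  proof (cases "n mod ord x = 0")
    case True
    then have "ord x dvd n" by auto
    with cop have "ord x = 1" using coprime_absorb_right[of "ord x" n] by (simp add: coprime_commute)
    have "w = x [^] (n mod ord x)" using assms pow_mod_ord[of x n] by metis
    then have "w = x [^] (1::nat)" using assms \<open>ord x = 1\<close> ord_eq_1 by simp
    moreover have "1 \<in> tot (ord x)" using d1 by (simp add: tot_def)
    ultimately show ?thesis unfolding gens_def by blast
  next
    case False
    have "coprime (n mod ord x) (ord x)" using cop d1 by simp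
    moreover have "n mod ord x \<le> ord x" using d1 by (meson less_imp_le mod_less_divisor less_le_trans zero_less_one)
    ultimately have "n mod ord x \<in> tot (ord x)" using False by (simp add: tot_def)
    moreover have "w = x [^] (n mod ord x)" using assms pow_mod_ord[of x n] by metis
    ultimately show ?thesis unfolding gens_def by blast
  qed
qed

lemma gens_card:
  assumes "finite (carrier G)" "x \<in> carrier G"
  shows "card (gens x) = card (tot (ord x))"
proof -
  have "inj_on (\<lambda>k. x [^] k) (tot (ord x))"
    using ord_inj'[OF assms(2)] by (rule inj_on_subset) (auto simp: tot_def)
  then show ?thesis unfolding gens_def by (simp add: card_image)
qed

lemma gens_finite: "finite (tot d)" by (simp add: tot_def)

lemma gens_eq:
  assumes "finite (carrier G)" "x \<in> carrier G" "y \<in> gens x"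
  shows "gens y = gens x"
proof -
  have y: "y \<in> carrier G" "ord y = ord x" using gens_ord assms by auto
  obtain k :: nat where k: "y = x [^] k" using assms(3) unfolding gens_def by blast
  have sub: "gens y \<subseteq> gens x"
  proof
    fix w assume w: "w \<in> gens y"
    have "ord w = ord x" using gens_ord[OF assms(1) y(1) w] y by simp
    moreover obtain l :: nat where "w = y [^] l" using w unfolding gens_def by blast
    then have "w = x [^] (k * l)" using k assms by (simp add: nat_pow_pow)
    ultimately show "w \<in> gens x" using gens_in assms by blast
  qed
  have "card (gens y) = card (gens x)" using gens_card assms y by simp
  moreover have "finite (gens x)" unfolding gens_def by (simp add: tot_def)
  ultimately show ?thesis using sub by (simp add: card_subset_eq)
qed


lemma card_ord_eq_dvd:
  assumes "finite (carrier G)"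
  shows "card (tot d) dvd card {x \<in> carrier G. ord x = d}"
proof -
  let ?E = "{x \<in> carrier G. ord x = d}"
  let ?C = "gens ` ?E"
  have U: "\<Union>?C = ?E"
  proof
    show "\<Union>?C \<subseteq> ?E" using gens_ord assms by fastforce
    show "?E \<subseteq> \<Union>?C" using gens_self assms by fastforce
  qed
  have "card (tot d) * card ?C = card (\<Union>?C)"
  proof (rule card_partition)
    show "finite ?C" using assms by simp
    show "finite (\<Union>?C)" using U assms by simp
    show "\<And>c. c \<in> ?C \<Longrightarrow> card c = card (tot d)" using gens_card assms by auto
    show "\<And>c1 c2. c1 \<in> ?C \<Longrightarrow> c2 \<in> ?C \<Longrightarrow> c1 \<noteq> c2 \<Longrightarrow> c1 \<inter> c2 = {}"
    proof -
      fix c1 c2 assume "c1 \<in> ?C" "c2 \<in> ?C" "c1 \<noteq> c2"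
      then obtain x1 x2 where x: "x1 \<in> ?E" "x2 \<in> ?E" "c1 = gens x1" "c2 = gens x2" by blast
      show "c1 \<inter> c2 = {}"
      proof (rule ccontr)
        assume "c1 \<inter> c2 \<noteq> {}"
        then obtain z where "z \<in> gens x1" "z \<in> gens x2" using x by blast
        then have "gens z = gens x1" "gens z = gens x2" using gens_eq assms x by auto
        then show False using x \<open>c1 \<noteq> c2\<close> by simp
      qed
    qed
  qed
  then show ?thesis using U by (metis dvd_triv_left)
qed

end

context group begin

lemma inv_cancel_left [simp]: "g \<in> carrier G \<Longrightarrow> a \<in> carrier G \<Longrightarrow> inv g \<otimes> (g \<otimes> a) = a"
  by (simp add: m_assoc[symmetric])

lemma inv_cancel_left' [simp]: "g \<in> carrier G \<Longrightarrow> a \<in> carrier G \<Longrightarrow> g \<otimes> (inv g \<otimes> a) = a"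
  by (simp add: m_assoc[symmetric])

definition cj :: "'a \<Rightarrow> 'a \<Rightarrow> 'a" where "cj g h = g \<otimes> h \<otimes> inv g"

lemma cj_closed [simp]: "g \<in> carrier G \<Longrightarrow> h \<in> carrier G \<Longrightarrow> cj g h \<in> carrier G"
  by (simp add: cj_def)

lemma cj_mult:
  assumes "g \<in> carrier G" "a \<in> carrier G" "b \<in> carrier G"
  shows "cj g (a \<otimes> b) = cj g a \<otimes> cj g b"
  using assms by (simp add: cj_def m_assoc)

lemma cj_one [simp]: "g \<in> carrier G \<Longrightarrow> cj g \<one> = \<one>"
  by (simp add: cj_def)

lemma cj_pow:
  assumes "g \<in> carrier G" "a \<in> carrier G"
  shows "cj g (a [^] (n::nat)) = (cj g a) [^] n"
proof (induction n)
  case 0 then show ?case using assms by simp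
next
  case (Suc n)
  have "cj g (a [^] Suc n) = cj g (a [^] n \<otimes> a)" by simp
  also have "\<dots> = cj g (a [^] n) \<otimes> cj g a" using assms by (simp add: cj_mult)
  also have "\<dots> = (cj g a) [^] Suc n" using Suc by simp
  finally show ?case .
qed

lemma cj_inv_cj:
  assumes "g \<in> carrier G" "a \<in> carrier G"
  shows "cj (inv g) (cj g a) = a"
  using assms by (simp add: cj_def m_assoc)

lemma cj_inj:
  assumes "g \<in> carrier G"
  shows "inj_on (cj g) (carrier G)"
  using assms by (metis cj_inv_cj inj_onI)

lemma cj_central:
  assumes "g \<in> carrier G" "a \<in> carrier G" "\<forall>h\<in>carrier G. h \<otimes> a = a \<otimes> h"
  shows "cj g a = a"
  using assms by (simp add: cj_def m_assoc[symmetric]) (simp add: m_assoc)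

lemma cj_eq_iff:
  assumes "g \<in> carrier G" "a \<in> carrier G"
  shows "cj g a = a \<longleftrightarrow> g \<otimes> a = a \<otimes> g"
  using assms by (simp add: cj_def inv_solve_right')

end


context group begin

lemma frob_step:
  assumes fin: "finite (carrier G)" and pr: "Factorial_Ring.prime (p::nat)"
    and IH: "\<And>H. subgroup H G \<Longrightarrow> card H < order G \<Longrightarrow>
       p ^ multiplicity p (card H) dvd card {x \<in> H. \<exists>k. x [^] (p ^ k) = \<one>}"
  shows "p ^ multiplicity p (order G) dvd card {x \<in> carrier G. \<exists>k. x [^] (p ^ k) = \<one>}"
proof -
  define N where "N = order G"
  define s where "s = multiplicity p N"
  define m where "m = N div p^s"
  define PX where "PX = {x \<in> carrier G. \<exists>k. x [^] (p ^ k) = \<one>}"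
  define CZ where "CZ = (\<lambda>z. {g \<in> carrier G. g \<otimes> z = z \<otimes> g})"
  define Y where "Y = {z \<in> carrier G. z [^] m = \<one>}"
  have N0: "N > 0" using fin unfolding N_def by (simp add: order_gt_0_iff_finite)
  have Ndec: "N = p^s * m" unfolding m_def s_def by (simp add: multiplicity_dvd)
  have m0: "m > 0" using N0 Ndec by (cases m) auto
  have pm: "\<not> p dvd m" unfolding m_def s_def
    using multiplicity_decompose[of N p] N0 prime_gt_1_nat[OF pr] by simp
  have cop: "coprime (p^s) m" using pm pr by (simp add: prime_imp_coprime)
  have Xpow: "x [^] (p^s) = \<one>" if xX: "x \<in> PX" for x
  proof -
    obtain k where k: "x [^] (p ^ k) = \<one>" "x \<in> carrier G" using xX unfolding PX_def by auto
    have "ord x dvd p^k" using iffD1[OF pow_eq_id[OF k(2)] k(1)] .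
    moreover have "coprime (p^k) m" using pm pr by (simp add: prime_imp_coprime)
    ultimately have "coprime (ord x) m" using coprime_divisors[of "ord x" "p^k" m m] by simp
    moreover have "ord x dvd p^s * m" using ord_dvd_group_order[OF k(2)] Ndec N_def by simp
    ultimately have "ord x dvd p^s" using coprime_dvd_mult_left_iff[of "ord x" m "p^s"] by simp
    then show ?thesis using pow_eq_id[OF k(2)] by simp
  qed
  obtain u v where uv: "m * u = p^s * v + 1"
    using bezout_nat[of m "p^s"] m0 cop by (auto simp: coprime_commute coprime_iff_gcd_eq_1)
  define ea where "ea = m * u"
  define eb where "eb = p^s * v * (N - 1)"
  have ee: "ea + eb = N * (p^s * v) + 1"
  proof -
    obtain N' where N': "N = Suc N'" using N0 by (cases N) auto
    show ?thesis unfolding ea_def eb_def uv N' by (simp add: algebra_simps)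
  qed
  have powN: "w [^] N = \<one>" if "w \<in> carrier G" for w
    using pow_order_eq_1[OF that] N_def by simp
  have gee: "w [^] ea \<otimes> w [^] eb = w" if w: "w \<in> carrier G" for w
  proof -
    have "w [^] ea \<otimes> w [^] eb = w [^] (ea + eb)" using w by (simp add: nat_pow_mult)
    also have "\<dots> = (w [^] N) [^] (p^s * v) \<otimes> w [^] (1::nat)"
      unfolding ee using w by (simp add: nat_pow_mult nat_pow_pow)
    also have "\<dots> = w" using w powN by simp
    finally show ?thesis .
  qed
  have geX: "w [^] ea \<in> PX" if w: "w \<in> carrier G" for w
  proof -
    have "(w [^] ea) [^] (p^s) = (w [^] N) [^] u" using w
      by (simp add: nat_pow_pow ea_def Ndec algebra_simps)
    then have "(w [^] ea) [^] (p^s) = \<one>" using powN w by simp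
    then show ?thesis unfolding PX_def using w by blast
  qed
  have geY: "w [^] eb \<in> Y" if w: "w \<in> carrier G" for w
  proof -
    have "(w [^] eb) [^] m = (w [^] N) [^] (v * (N - 1))" using w
      by (simp add: nat_pow_pow eb_def Ndec algebra_simps)
    then have "(w [^] eb) [^] m = \<one>" using powN w by simp
    then show ?thesis unfolding Y_def using w by blast
  qed
  have gcomm: "w [^] ea \<otimes> w [^] eb = w [^] eb \<otimes> w [^] ea" if w: "w \<in> carrier G" for w
    using w by (simp add: nat_pow_mult add.commute)
  have Xe': "x [^] eb = \<one>" if "x \<in> PX" for x
  proof -
    have "x [^] eb = (x [^] (p^s)) [^] (v * (N - 1))" using that unfolding PX_def
      by (simp add: nat_pow_pow eb_def algebra_simps)
    then show ?thesis using Xpow[OF that] by simp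
  qed
  have Ye: "z [^] ea = \<one>" if "z \<in> Y" for z
  proof -
    have zc: "z \<in> carrier G" using that unfolding Y_def by simp
    have "z [^] ea = (z [^] m) [^] u" using zc
      by (simp add: nat_pow_pow ea_def)
    then show ?thesis using that unfolding Y_def by simp
  qed
  have bij: "bij_betw (\<lambda>g. (g [^] eb, g [^] ea)) (carrier G) (SIGMA z:Y. PX \<inter> CZ z)"
  proof (rule bij_betw_byWitness[where f'="\<lambda>(z, x). x \<otimes> z"])
    show "\<forall>a\<in>carrier G. (\<lambda>(z, x). x \<otimes> z) (a [^] eb, a [^] ea) = a" using gee by simp
    show "(\<lambda>g. (g [^] eb, g [^] ea)) ` carrier G \<subseteq> (SIGMA z:Y. PX \<inter> CZ z)"
      using geX geY gcomm unfolding CZ_def PX_def by auto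
    show "(\<lambda>(z, x). x \<otimes> z) ` (SIGMA z:Y. PX \<inter> CZ z) \<subseteq> carrier G"
      unfolding PX_def Y_def by auto
    show "\<forall>a'\<in>(SIGMA z:Y. PX \<inter> CZ z). (\<lambda>g. (g [^] eb, g [^] ea)) ((\<lambda>(z, x). x \<otimes> z) a') = a'"
    proof
      fix a' assume a': "a' \<in> (SIGMA z:Y. PX \<inter> CZ z)"
      then obtain z x where zx: "a' = (z, x)" "z \<in> Y" "x \<in> PX" "x \<otimes> z = z \<otimes> x"
        unfolding CZ_def by auto
      have c: "x \<in> carrier G" "z \<in> carrier G" using zx unfolding PX_def Y_def by auto
      have "x = x [^] ea" using gee[OF c(1)] Xe'[OF zx(3)] c by simp
      have "z = z [^] eb" using gee[OF c(2)] Ye[OF zx(2)] c by simp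
      have "(x \<otimes> z) [^] ea = x [^] ea \<otimes> z [^] ea" using pow_mult_distrib zx c by blast
      also have "\<dots> = x" using Ye[OF zx(2)] c \<open>x = x [^] ea\<close> by simp
      finally have 1: "(x \<otimes> z) [^] ea = x" .
      have "(x \<otimes> z) [^] eb = x [^] eb \<otimes> z [^] eb" using pow_mult_distrib zx c by blast
      also have "\<dots> = z" using Xe'[OF zx(3)] c \<open>z = z [^] eb\<close> by simp
      finally have 2: "(x \<otimes> z) [^] eb = z" .
      show "(\<lambda>g. (g [^] eb, g [^] ea)) ((\<lambda>(z, x). x \<otimes> z) a') = a'" using 1 2 zx by simp
    qed
  qed
  have finY: "finite Y" using fin unfolding Y_def by simp
  have card_dec: "N = (\<Sum>z\<in>Y. card (PX \<inter> CZ z))"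
  proof -
    have "N = card (SIGMA z:Y. PX \<inter> CZ z)" using bij_betw_same_card[OF bij] N_def order_def by metis
    also have "\<dots> = (\<Sum>z\<in>Y. card (PX \<inter> CZ z))"
      using finY fin by (intro card_SigmaI) (auto simp: PX_def)
    finally show ?thesis .
  qed
  define Yc where "Yc = {z \<in> Y. CZ z = carrier G}"
  define Yn where "Yn = {z \<in> Y. CZ z \<noteq> carrier G}"
  define F where "F = (\<lambda>z. if z \<in> Yn then card (PX \<inter> CZ z) else 0)"
  have PXc: "PX \<subseteq> carrier G" unfolding PX_def by auto
  have CZc: "CZ z \<subseteq> carrier G" for z unfolding CZ_def by auto
  have finPX: "finite PX" using PXc fin finite_subset by blast
  have split: "(\<Sum>z\<in>Y. card (PX \<inter> CZ z)) = card Yc * card PX + (\<Sum>z\<in>carrier G. F z)"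
  proof -
    have "Y = Yc \<union> Yn" "Yc \<inter> Yn = {}" unfolding Yc_def Yn_def by auto
    moreover have "finite Yc" "finite Yn" using finY unfolding Yc_def Yn_def by auto
    ultimately have "(\<Sum>z\<in>Y. card (PX \<inter> CZ z)) = (\<Sum>z\<in>Yc. card (PX \<inter> CZ z)) + (\<Sum>z\<in>Yn. card (PX \<inter> CZ z))"
      by (simp add: sum.union_disjoint)
    moreover have "(\<Sum>z\<in>Yc. card (PX \<inter> CZ z)) = card Yc * card PX"
    proof -
      have "(\<Sum>z\<in>Yc. card (PX \<inter> CZ z)) = (\<Sum>z\<in>Yc. card PX)"
        using PXc unfolding Yc_def by (intro sum.cong) (auto simp: Int_absorb2)
      then show ?thesis by simp
    qed
    moreover have "(\<Sum>z\<in>Yn. card (PX \<inter> CZ z)) = (\<Sum>z\<in>carrier G. F z)"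
    proof -
      have "Yn = {z \<in> carrier G. z \<in> Yn}" unfolding Yn_def Y_def by auto
      then have "(\<Sum>z\<in>Yn. card (PX \<inter> CZ z)) = (\<Sum>z\<in>{z \<in> carrier G. z \<in> Yn}. card (PX \<inter> CZ z))" by simp
      also have "\<dots> = (\<Sum>z\<in>carrier G. F z)" unfolding F_def using fin by (simp add: sum.inter_filter)
      finally show ?thesis .
    qed
    ultimately show ?thesis by simp
  qed
  have cjPX: "cj g x \<in> PX" if gx: "g \<in> carrier G" "x \<in> PX" for g x
  proof -
    obtain k where k: "x [^] (p ^ k) = \<one>" "x \<in> carrier G" using gx(2) unfolding PX_def by auto
    have "(cj g x) [^] (p ^ k) = \<one>" using cj_pow[OF gx(1) k(2), of "p^k"] k gx(1) by simp
    then show ?thesis unfolding PX_def using gx k by auto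
  qed
  have cjCZ: "cj g x \<in> CZ (cj g z)" if "g \<in> carrier G" "z \<in> carrier G" "x \<in> CZ z" for g x z
  proof -
    have x: "x \<in> carrier G" "x \<otimes> z = z \<otimes> x" using that unfolding CZ_def by auto
    have "cj g x \<otimes> cj g z = cj g (x \<otimes> z)" using cj_mult[of g x z] that x(1) by simp
    also have "\<dots> = cj g (z \<otimes> x)" using x by simp
    also have "\<dots> = cj g z \<otimes> cj g x" using cj_mult[of g z x] that x(1) by simp
    finally have "cj g x \<otimes> cj g z = cj g z \<otimes> cj g x" .
    then show ?thesis unfolding CZ_def using that x by simp
  qed
  have le: "card (PX \<inter> CZ z) \<le> card (PX \<inter> CZ (cj g z))" if "g \<in> carrier G" "z \<in> carrier G" for g z
  proof (rule card_inj_on_le)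
    show "inj_on (cj g) (PX \<inter> CZ z)" using inj_on_subset[OF cj_inj[OF that(1)]] PXc by blast
    show "cj g ` (PX \<inter> CZ z) \<subseteq> PX \<inter> CZ (cj g z)" using cjPX cjCZ that by auto
    show "finite (PX \<inter> CZ (cj g z))" using finPX by simp
  qed
  have eqc: "card (PX \<inter> CZ (cj g z)) = card (PX \<inter> CZ z)" if "g \<in> carrier G" "z \<in> carrier G" for g z
    using le[OF that] le[of "inv g" "cj g z"] that cj_inv_cj by fastforce
  have Yinv: "cj g z \<in> Y \<longleftrightarrow> z \<in> Y" if "g \<in> carrier G" "z \<in> carrier G" for g z
  proof -
    have "(cj g z) [^] m = cj g (z [^] m)" using cj_pow that by simp
    moreover have "cj g (z [^] m) = \<one> \<longleftrightarrow> z [^] m = \<one>"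
      using cj_inj[OF that(1)] that by (metis cj_one inj_on_def nat_pow_closed one_closed)
    ultimately show ?thesis unfolding Y_def using that by auto
  qed
  have cen_iff: "CZ z = carrier G \<longleftrightarrow> (\<forall>h\<in>carrier G. h \<otimes> z = z \<otimes> h)" if "z \<in> carrier G" for z
    unfolding CZ_def by auto
  have ceninv: "CZ (cj g z) = carrier G \<longleftrightarrow> CZ z = carrier G" if "g \<in> carrier G" "z \<in> carrier G" for g z
  proof
    assume "CZ z = carrier G"
    then show "CZ (cj g z) = carrier G" using cj_central that cen_iff by simp
  next
    assume a: "CZ (cj g z) = carrier G"
    have "cj (inv g) (cj g z) = cj g z" using cj_central a that cen_iff by simp
    then have "z = cj g z" using cj_inv_cj that by simp
    then show "CZ z = carrier G" using a by simp
  qed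
  have Finv: "F (cj g z) = F z" if "g \<in> carrier G" "z \<in> carrier G" for g z
    unfolding F_def Yn_def using Yinv[OF that] ceninv[OF that] eqc[OF that] by simp
  define \<phi> where "\<phi> = (\<lambda>g. (\<lambda>h \<in> carrier G. g \<otimes> h \<otimes> (inv g)))"
  interpret A: group_action G "carrier G" \<phi> unfolding \<phi>_def by (rule action_by_conjugation)
  have \<phi>cj: "\<phi> g h = cj g h" if "h \<in> carrier G" for g h using that unfolding \<phi>_def cj_def by simp
  have stab: "stabilizer G \<phi> z = CZ z" if "z \<in> carrier G" for z
    unfolding stabilizer_def CZ_def using \<phi>cj[OF that] cj_eq_iff that by auto
  have orbdvd: "p^s dvd (\<Sum>x\<in>orb. F x)" if orb: "orb \<in> orbits G (carrier G) \<phi>" for orb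
  proof -
    obtain z0 where z0: "z0 \<in> carrier G" "orb = orbit G \<phi> z0" using orb unfolding orbits_def by auto
    have "(\<Sum>x\<in>orb. F x) = (\<Sum>x\<in>orb. F z0)"
    proof (rule sum.cong)
      fix x assume "x \<in> orb"
      then obtain g where "g \<in> carrier G" "x = \<phi> g z0" using z0 unfolding orbit_def by auto
      then show "F x = F z0" using Finv z0 \<phi>cj by simp
    qed simp
    also have "\<dots> = card orb * F z0" by simp
    finally have sumeq: "(\<Sum>x\<in>orb. F x) = card orb * F z0" .
    show ?thesis
    proof (cases "z0 \<in> Yn")
      case False
      then show ?thesis using sumeq unfolding F_def by simp
    next
      case True
      have os: "card orb * card (CZ z0) = N"
        using A.orbit_stabilizer_theorem[OF z0(1)] stab[OF z0(1)] z0 N_def by simp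
      have sg: "subgroup (CZ z0) G" using A.stabilizer_subgroup[OF z0(1)] stab[OF z0(1)] by simp
      have "CZ z0 \<subset> carrier G" using True CZc unfolding Yn_def by auto
      then have lt: "card (CZ z0) < order G" unfolding order_def using fin by (simp add: psubset_card_mono)
      have "{x \<in> CZ z0. \<exists>k. x [^] (p ^ k) = \<one>} = PX \<inter> CZ z0" unfolding PX_def CZ_def by auto
      then have d1: "p ^ multiplicity p (card (CZ z0)) dvd card (PX \<inter> CZ z0)" using IH[OF sg lt] by simp
      have d2: "p ^ multiplicity p (card orb) dvd card orb" by (rule multiplicity_dvd)
      have nz: "card orb \<noteq> 0" "card (CZ z0) \<noteq> 0" using os N0 by auto
      have "s = multiplicity p (card orb) + multiplicity p (card (CZ z0))"
        unfolding s_def os[symmetric] using nz pr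
        by (simp add: prime_elem_multiplicity_mult_distrib)
      then have "p^s = p ^ multiplicity p (card orb) * p ^ multiplicity p (card (CZ z0))"
        by (simp add: power_add)
      then have "p^s dvd card orb * card (PX \<inter> CZ z0)" using d1 d2 by (simp add: mult_dvd_mono)
      then show ?thesis using sumeq True unfolding F_def by simp
    qed
  qed
  have Fdvd: "p^s dvd (\<Sum>z\<in>carrier G. F z)"
  proof -
    have "(\<Sum>z\<in>carrier G. F z) = (\<Sum>orb\<in>orbits G (carrier G) \<phi>. \<Sum>x\<in>orb. F x)"
      using A.disjoint_sum[OF fin, of F] by simp
    also have "p^s dvd \<dots>" using orbdvd by (rule dvd_sum)
    finally show ?thesis .
  qed
  have Ycsub: "subgroup Yc G"
  proof (rule subgroupI)
    show "Yc \<subseteq> carrier G" unfolding Yc_def Y_def by auto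
    show "Yc \<noteq> {}"
    proof -
      have "\<one> \<in> Yc" unfolding Yc_def Y_def CZ_def by auto
      then show ?thesis by blast
    qed
  next
    fix a assume a: "a \<in> Yc"
    have ac: "a \<in> carrier G" "a [^] m = \<one>" "\<forall>h\<in>carrier G. h \<otimes> a = a \<otimes> h"
      using a unfolding Yc_def Y_def CZ_def by auto
    have "(inv a) [^] m = \<one>" using ac by (simp add: nat_pow_inv)
    moreover have invz: "h \<otimes> inv a = inv a \<otimes> h" if h: "h \<in> carrier G" for h
    proof -
      have "a \<otimes> (h \<otimes> inv a) = (a \<otimes> h) \<otimes> inv a" using ac h by (simp add: m_assoc)
      also have "\<dots> = (h \<otimes> a) \<otimes> inv a" using ac(3) h by simp
      also have "\<dots> = h" using ac(1) h by (simp add: m_assoc)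
      finally have "a \<otimes> (h \<otimes> inv a) = h" .
      then show ?thesis using inv_solve_left[of "h \<otimes> inv a" a h] ac h by simp
    qed
    ultimately have "CZ (inv a) = carrier G" unfolding CZ_def using ac(1) by auto
    then show "inv a \<in> Yc" unfolding Yc_def Y_def using \<open>(inv a) [^] m = \<one>\<close> ac(1) by simp
  next
    fix a b assume a: "a \<in> Yc" and b: "b \<in> Yc"
    have ac: "a \<in> carrier G" "a [^] m = \<one>" "\<forall>h\<in>carrier G. h \<otimes> a = a \<otimes> h"
      using a unfolding Yc_def Y_def CZ_def by auto
    have bc: "b \<in> carrier G" "b [^] m = \<one>" "\<forall>h\<in>carrier G. h \<otimes> b = b \<otimes> h"
      using b unfolding Yc_def Y_def CZ_def by auto
    have abc: "a \<otimes> b = b \<otimes> a" using bc(3) ac(1) by blast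
    have "(a \<otimes> b) [^] m = a [^] m \<otimes> b [^] m" using pow_mult_distrib[OF abc ac(1) bc(1)] .
    then have abm: "(a \<otimes> b) [^] m = \<one>" using ac(1,2) bc(1,2) by simp
    have abz: "h \<otimes> (a \<otimes> b) = (a \<otimes> b) \<otimes> h" if h: "h \<in> carrier G" for h
    proof -
      have "h \<otimes> (a \<otimes> b) = (h \<otimes> a) \<otimes> b" using h ac(1) bc(1) by (simp add: m_assoc)
      also have "\<dots> = (a \<otimes> h) \<otimes> b" using h ac(3) by simp
      also have "\<dots> = a \<otimes> (h \<otimes> b)" using h ac(1) bc(1) by (simp add: m_assoc)
      also have "\<dots> = a \<otimes> (b \<otimes> h)" using h bc(3) by simp
      also have "\<dots> = (a \<otimes> b) \<otimes> h" using h ac(1) bc(1) by (simp add: m_assoc)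
      finally show ?thesis .
    qed
    have "CZ (a \<otimes> b) = carrier G" unfolding CZ_def using abz ac(1) bc(1) by auto
    then show "a \<otimes> b \<in> Yc" unfolding Yc_def Y_def using abm ac(1) bc(1) by simp
  qed
  have finYc: "finite Yc" using finY unfolding Yc_def by simp
  have pYc: "\<not> p dvd card Yc"
  proof
    assume pd: "p dvd card Yc"
    define K where "K = G\<lparr>carrier := Yc\<rparr>"
    have grK: "group K" unfolding K_def using subgroup.subgroup_is_group[OF Ycsub] is_group by blast
    have "sylow K p 1 (card Yc div p)"
      unfolding sylow_eq
    proof
      show "group K" by (rule grK)
      show "sylow_axioms K p 1 (card Yc div p)"
        using pr pd finYc unfolding sylow_axioms_def K_def order_def by simp
    qed
    then obtain H where H: "subgroup H K" "card H = p ^ 1" using sylow.sylow_thm by blast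
    have HYc: "H \<subseteq> Yc" using subgroup.subset[OF H(1)] unfolding K_def by simp
    have "\<exists>h\<in>H. h \<noteq> \<one>"
    proof (rule ccontr)
      assume "\<not> (\<exists>h\<in>H. h \<noteq> \<one>)"
      then have "H \<subseteq> {\<one>}" by blast
      then have "card H \<le> 1" using card_mono[of "{\<one>}" H] by simp
      then show False using H(2) prime_gt_1_nat[OF pr] by simp
    qed
    then obtain h where h: "h \<in> H" "h \<noteq> \<one>" by blast
    have hc: "h \<in> carrier G" "h [^] m = \<one>" using h HYc unfolding Yc_def Y_def by auto
    have grK2: "group (K\<lparr>carrier := H\<rparr>)" using subgroup.subgroup_is_group[OF H(1) grK] .
    have "h [^]\<^bsub>K\<lparr>carrier := H\<rparr>\<^esub> order (K\<lparr>carrier := H\<rparr>) = \<one>\<^bsub>K\<lparr>carrier := H\<rparr>\<^esub>"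
      using group.pow_order_eq_1[OF grK2] h(1) by simp
    then have "h [^] p = \<one>" using H(2) unfolding K_def order_def
      by (simp add: nat_pow_consistent[symmetric])
    then have "ord h dvd p" using pow_eq_id[OF hc(1)] by simp
    moreover have "ord h \<noteq> 1" using ord_eq_1[OF hc(1)] h(2) by simp
    ultimately have "ord h = p" using pr prime_nat_iff by blast
    moreover have "ord h dvd m" using pow_eq_id[OF hc(1)] hc(2) by simp
    ultimately show False using pm by simp
  qed
  have "p^s dvd N" using Ndec by simp
  then have "p^s dvd card Yc * card PX + (\<Sum>z\<in>carrier G. F z)" using card_dec split by simp
  then have "p^s dvd card Yc * card PX" using Fdvd by (simp add: dvd_add_left_iff)
  moreover have "coprime (p^s) (card Yc)" using pYc pr by (simp add: prime_imp_coprime)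
  ultimately have "p^s dvd card PX" using coprime_dvd_mult_right_iff by blast
  then show ?thesis unfolding s_def N_def PX_def .
qed

end


lemma frob_p:
  fixes G :: "('a,'b) monoid_scheme"
  assumes "group G" "finite (carrier G)" "Factorial_Ring.prime (p::nat)"
  shows "p ^ multiplicity p (order G) dvd card {x \<in> carrier G. \<exists>k. x [^]\<^bsub>G\<^esub> (p ^ k) = \<one>\<^bsub>G\<^esub>}"
  using assms
proof (induction "order G" arbitrary: G rule: less_induct)
  case less
  show ?case
  proof (rule group.frob_step[OF less.prems(1) less.prems(2) less.prems(3)])
    fix H assume H: "subgroup H G" "card H < order G"
    let ?K = "G\<lparr>carrier := H\<rparr>"
    have "group ?K" using subgroup.subgroup_is_group[OF H(1) less.prems(1)] .
    moreover have "finite (carrier ?K)" using less.prems(2) subgroup.subset[OF H(1)] finite_subset by auto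
    moreover have "order ?K < order G" using H(2) by (simp add: order_def)
    ultimately have "p ^ multiplicity p (order ?K) dvd card {x \<in> carrier ?K. \<exists>k. x [^]\<^bsub>?K\<^esub> (p^k) = \<one>\<^bsub>?K\<^esub>}"
      using less.hyps less.prems(3) by blast
    then show "p ^ multiplicity p (card H) dvd card {x \<in> H. \<exists>k. x [^]\<^bsub>G\<^esub> (p ^ k) = \<one>\<^bsub>G\<^esub>}"
      by (simp add: order_def nat_pow_def)
  qed
qed

context group begin

lemma pelem_pow:
  assumes fin: "finite (carrier G)" and pr: "Factorial_Ring.prime (p::nat)"
    and x: "x \<in> carrier G" "x [^] (p ^ k) = \<one>"
  shows "x [^] (p ^ multiplicity p (order G)) = \<one>"
proof -
  have "ord x dvd p ^ k" using pow_eq_id[OF x(1)] x(2) by simp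
  then obtain i where i: "ord x = p ^ i" using divides_primepow_nat[OF pr] by blast
  have "p ^ i dvd order G" using ord_dvd_group_order[OF x(1)] i by simp
  moreover have "order G \<noteq> 0" using fin by (simp add: order_gt_0_iff_finite[symmetric])
  moreover have "\<not> is_unit p" using prime_gt_1_nat[OF pr] by simp
  ultimately have "i \<le> multiplicity p (order G)" using power_dvd_iff_le_multiplicity[of "order G" p i] by simp
  then have "ord x dvd p ^ multiplicity p (order G)" using i by (simp add: le_imp_power_dvd)
  then show ?thesis using pow_eq_id[OF x(1)] by simp
qed

lemma Lsplit:
  assumes fin: "finite (carrier G)" and pr: "Factorial_Ring.prime (p::nat)"
  shows "card {x \<in> carrier G. x [^] (p ^ Suc n) = \<one>}
       = card {x \<in> carrier G. x [^] (p ^ n) = \<one>} + card {x \<in> carrier G. ord x = p ^ Suc n}"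
proof -
  have p1: "p > 1" using prime_gt_1_nat[OF pr] .
  have "{x \<in> carrier G. x [^] (p ^ Suc n) = \<one>}
      = {x \<in> carrier G. x [^] (p ^ n) = \<one>} \<union> {x \<in> carrier G. ord x = p ^ Suc n}"
  proof (rule equalityI; rule subsetI)
    fix x assume xa: "x \<in> {x \<in> carrier G. x [^] (p ^ Suc n) = \<one>}"
    then have xc: "x \<in> carrier G" by simp
    have xo: "ord x dvd p ^ Suc n" using xa pow_eq_id[OF xc] by simp
    then obtain i where i: "i \<le> Suc n" "ord x = p ^ i" using divides_primepow_nat[OF pr] by blast
    show "x \<in> {x \<in> carrier G. x [^] (p ^ n) = \<one>} \<union> {x \<in> carrier G. ord x = p ^ Suc n}"
    proof (cases "i = Suc n")
      case True then show ?thesis using xc i by simp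
    next
      case False
      then have "i \<le> n" using i by simp
      then have "ord x dvd p ^ n" using i by (simp add: le_imp_power_dvd)
      then have "x [^] (p ^ n) = \<one>" using pow_eq_id[OF xc] by simp
      then show ?thesis using xc by simp
    qed
  next
    fix x assume xa: "x \<in> {x \<in> carrier G. x [^] (p ^ n) = \<one>} \<union> {x \<in> carrier G. ord x = p ^ Suc n}"
    then have xc: "x \<in> carrier G" by blast
    have "x [^] (p ^ n) = \<one> \<or> ord x = p ^ Suc n" using xa by blast
    then have "ord x dvd p ^ n \<or> ord x = p ^ Suc n" using pow_eq_id[OF xc, of "p ^ n"] by simp
    moreover have "p ^ n dvd p ^ Suc n" by (simp add: le_imp_power_dvd)
    ultimately have "ord x dvd p ^ Suc n" using dvd_trans by auto
    then have "x [^] (p ^ Suc n) = \<one>" using pow_eq_id[OF xc] by simp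
    then show "x \<in> {x \<in> carrier G. x [^] (p ^ Suc n) = \<one>}" using xc by simp
  qed
  moreover have "{x \<in> carrier G. x [^] (p ^ n) = \<one>} \<inter> {x \<in> carrier G. ord x = p ^ Suc n} = {}"
  proof -
    have nd: "\<not> p ^ Suc n dvd p ^ n" by (rule nat_dvd_not_less) (use p1 in auto)
    have "\<not> (x \<in> carrier G \<and> x [^] (p ^ n) = \<one> \<and> ord x = p ^ Suc n)" for x
    proof
      assume h: "x \<in> carrier G \<and> x [^] (p ^ n) = \<one> \<and> ord x = p ^ Suc n"
      then have "ord x dvd p ^ n" using pow_eq_id[of x "p ^ n"] by simp
      then show False using h nd by simp
    qed
    then show ?thesis by blast
  qed
  ultimately show ?thesis using fin by (simp add: card_Un_disjoint)
qed

lemma tot_card_pp: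
  assumes pr: "Factorial_Ring.prime (p::nat)"
  shows "card (tot (p ^ Suc n)) = p ^ n * (p - 1)"
  using totient_prime_power_Suc[OF pr, of n] unfolding totient_def totatives_def tot_def .

lemma frob_pp:
  assumes fin: "finite (carrier G)" and pr: "Factorial_Ring.prime (p::nat)"
    and dv: "p ^ k dvd order G"
  shows "p ^ k dvd card {x \<in> carrier G. x [^] (p ^ k) = \<one>}"
proof -
  define s where "s = multiplicity p (order G)"
  have "order G \<noteq> 0" using fin by (simp add: order_gt_0_iff_finite[symmetric])
  moreover have "\<not> is_unit p" using prime_gt_1_nat[OF pr] by simp
  ultimately have ks: "k \<le> s" using dv power_dvd_iff_le_multiplicity[of "order G" p k] unfolding s_def by simp
  have base: "p ^ s dvd card {x \<in> carrier G. x [^] (p ^ s) = \<one>}"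
  proof -
    have "{x \<in> carrier G. x [^] (p ^ s) = \<one>} = {x \<in> carrier G. \<exists>k. x [^] (p ^ k) = \<one>}"
    proof (rule Collect_cong)
      fix x
      show "(x \<in> carrier G \<and> x [^] (p ^ s) = \<one>) = (x \<in> carrier G \<and> (\<exists>k. x [^] (p ^ k) = \<one>))"
      proof
        assume "x \<in> carrier G \<and> x [^] (p ^ s) = \<one>"
        then show "x \<in> carrier G \<and> (\<exists>k. x [^] (p ^ k) = \<one>)" by blast
      next
        assume h: "x \<in> carrier G \<and> (\<exists>k. x [^] (p ^ k) = \<one>)"
        then obtain k where "x [^] (p ^ k) = \<one>" by blast
        then have "x [^] (p ^ s) = \<one>" using pelem_pow[OF fin pr, of x k] h unfolding s_def by simp
        then show "x \<in> carrier G \<and> x [^] (p ^ s) = \<one>" using h by simp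
      qed
    qed
    then show ?thesis using frob_p[OF is_group fin pr] unfolding s_def by simp
  qed
  show ?thesis
  proof (rule inc_induct[OF ks, where P="\<lambda>k. p ^ k dvd card {x \<in> carrier G. x [^] (p ^ k) = \<one>}"])
    show "p ^ s dvd card {x \<in> carrier G. x [^] (p ^ s) = \<one>}" by (rule base)
  next
    fix n assume n: "k \<le> n" "n < s" and IH: "p ^ Suc n dvd card {x \<in> carrier G. x [^] (p ^ Suc n) = \<one>}"
    have "card (tot (p ^ Suc n)) dvd card {x \<in> carrier G. ord x = p ^ Suc n}"
      by (rule card_ord_eq_dvd[OF fin])
    moreover have "p ^ n dvd card (tot (p ^ Suc n))" using tot_card_pp[OF pr, of n] by simp
    ultimately have d1: "p ^ n dvd card {x \<in> carrier G. ord x = p ^ Suc n}"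
      using dvd_trans by blast
    have "p ^ n dvd p ^ Suc n" by (simp add: le_imp_power_dvd)
    then have "p ^ n dvd card {x \<in> carrier G. x [^] (p ^ Suc n) = \<one>}"
      using IH dvd_trans by blast
    then have "p ^ n dvd card {x \<in> carrier G. x [^] (p ^ n) = \<one>} + card {x \<in> carrier G. ord x = p ^ Suc n}"
      using Lsplit[OF fin pr, of n] by simp
    then show "p ^ n dvd card {x \<in> carrier G. x [^] (p ^ n) = \<one>}" using d1 by (simp add: dvd_add_left_iff)
  qed
qed

end

context group begin

lemma main_arg:
  fixes q f :: nat
  assumes "finite (carrier G)"
    and "order G > 1"
    and "Factorial_Ring.prime q" and "q dvd order G"
    and "\<And>p. Factorial_Ring.prime p \<Longrightarrow> p dvd order G \<Longrightarrow> q \<le> p"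
    and "f > 1"
    and "F_pp G = {1, f}"
  shows "f \<ge> q"
proof -
  note fin = assms(1)
  have "f \<in> F_pp G" using assms(7) by simp
  then obtain n where n: "n \<in> pp_divisors_exp G" "frob_quot G n = f" unfolding F_pp_def by auto
  then obtain p k where pk: "Factorial_Ring.prime (p::nat)" "n = p ^ k" "n dvd group_exp G"
    unfolding pp_divisors_exp_def by auto
  have expdvd: "group_exp G dvd order G" unfolding group_exp_def
    by (rule Lcm_least) (auto simp: ord_dvd_group_order)
  have fq0: "frob_quot G (p ^ 0) = 1"
  proof -
    have "frob_set G 1 = {\<one>}" unfolding frob_set_def by auto
    then show ?thesis unfolding frob_quot_def by simp
  qed
  have ex: "frob_quot G (p ^ k) \<noteq> 1" using n pk assms(6) by simp
  define j where "j = (LEAST j. frob_quot G (p ^ j) \<noteq> 1)"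
  have jk: "j \<le> k" unfolding j_def using ex by (rule Least_le)
  have fj: "frob_quot G (p ^ j) \<noteq> 1" unfolding j_def using ex by (rule LeastI)
  have j0: "j \<noteq> 0"
  proof
    assume "j = 0"
    then show False using fj fq0 by simp
  qed
  then obtain i where ji: "j = Suc i" by (cases j) auto
  have fi: "frob_quot G (p ^ i) = 1" using not_less_Least[of i "\<lambda>j. frob_quot G (p ^ j) \<noteq> 1"] ji j_def by simp
  have pjk: "p ^ j dvd p ^ k" using jk by (simp add: le_imp_power_dvd)
  then have pjexp: "p ^ j dvd group_exp G" using pk dvd_trans by blast
  have piexp: "p ^ i dvd group_exp G" using pjexp ji by (metis dvd_mult_left power_Suc2)
  have "p ^ j \<in> pp_divisors_exp G" using pjexp pk(1) unfolding pp_divisors_exp_def by blast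
  then have "frob_quot G (p ^ j) \<in> {1, f}" using assms(7) unfolding F_pp_def by blast
  then have fjf: "frob_quot G (p ^ j) = f" using fj by simp
  have pjG: "p ^ j dvd order G" using pjexp expdvd dvd_trans by blast
  have piG: "p ^ i dvd order G" using piexp expdvd dvd_trans by blast
  define Li where "Li = card {x \<in> carrier G. x [^] (p ^ i) = \<one>}"
  define Lj where "Lj = card {x \<in> carrier G. x [^] (p ^ j) = \<one>}"
  define E where "E = card {x \<in> carrier G. ord x = p ^ j}"
  have dLi: "p ^ i dvd Li" unfolding Li_def using frob_pp[OF fin pk(1) piG] .
  have dLj: "p ^ j dvd Lj" unfolding Lj_def using frob_pp[OF fin pk(1) pjG] .
  have qi: "Li div p ^ i = 1" using fi unfolding Li_def frob_quot_def frob_set_def .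
  have qj: "Lj div p ^ j = f" using fjf unfolding Lj_def frob_quot_def frob_set_def .
  have Lieq: "Li = p ^ i" using dLi qi by (metis dvd_mult_div_cancel mult.right_neutral)
  have Ljeq: "Lj = p ^ j * f" using dLj qj by (metis dvd_mult_div_cancel)
  have split: "Lj = Li + E" unfolding Lj_def Li_def E_def ji using Lsplit[OF fin pk(1)] .
  have "card (tot (p ^ j)) dvd E" unfolding E_def by (rule card_ord_eq_dvd[OF fin])
  then have dE: "p ^ i * (p - 1) dvd E" using tot_card_pp[OF pk(1), of i] ji by simp
  have p1: "p > 1" using prime_gt_1_nat[OF pk(1)] .
  have Eeq: "E = p ^ i * (p * f - 1)"
  proof -
    have "p ^ i * (p * f) = p ^ i + E" using Ljeq Lieq split ji by (simp add: algebra_simps)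
    moreover have "p * f \<ge> 1" using p1 assms(6) by simp
    ultimately show ?thesis by (simp add: right_diff_distrib')
  qed
  have "p - 1 dvd p * f - 1" using dE Eeq p1 by simp
  moreover have "p * f - 1 = (f - 1) + f * (p - 1)" using p1 assms(6)
    by (simp add: algebra_simps diff_mult_distrib2)
  ultimately have "p - 1 dvd f - 1" by (simp add: dvd_add_left_iff)
  then have "p - 1 \<le> f - 1" using assms(6) by (intro dvd_imp_le) auto
  then have "p \<le> f" using p1 by simp
  moreover have "p dvd order G" using pjG ji by (metis dvd_mult_left power_Suc)
  then have "q \<le> p" using assms(5) pk(1) by blast
  ultimately show ?thesis by simp
qed

end

theorem corollary1p4:
  fixes G :: "('a, 'b) monoid_scheme" and q f :: nat
  assumes "group G"
    and "finite (carrier G)"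
    and "order G > 1"
    and "Factorial_Ring.prime q" and "q dvd order G"
    and "\<And>p. Factorial_Ring.prime p \<Longrightarrow> p dvd order G \<Longrightarrow> q \<le> p"
    and "f > 1"
    and "F_pp G = {1, f}"
  shows "f \<ge> q"
  using group.main_arg[OF assms(1) assms(2) assms(3) assms(4) assms(5) assms(6) assms(7) assms(8)] .

end
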